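(* In the setting of the context, let $a,b\in X$ and $c\in C$ be such that some geodesic from $a$ to $b$ does not intersect $B_{R+2\delta}(c)$. Then $d_c(a,b)\le 4\delta$.
   Context: $X$ is a $\delta$-hyperbolic geodesic metric space ($\delta>0$, every geodesic triangle $\delta$-thin). $G$ acts on $X$ by isometries and $\mathcal{C}=(C,\{G_c\})$ is a $\rho$-separated fairly rotating family with $\rho\ge20\delta$ (i.e. $C\subseteq X$ is $G$-invariant, $G_c$ fixes $c$, $G_{gc}=gG_cg^{-1}$, distinct points of $C$ are at distance $\ge\rho$, and for $c\in C$, $g\in G_c\setminus\{1\}$, $x\in C\setminus\{c\}$ some geodesic from $x$ to $gx$ meets the closed $1$-ball about $c$). Fix $2+2\delta\le R\le\frac\rho2-3\delta$; $B_r(p)$ denotes the open ball. For $p\in C$, $S_p=\{x:d(x,p)=R\}$ with metric $d_{S_p}(x,y)=$ infimum of lengths of paths from $x$ to $y$ in $X\setminus B_R(p)$ (possibly $\infty$). For $x$ with $d(x,p)\ge R$, $\pi_p(x)\subseteq S_p$ is the set of points where geodesics $[p,x]$ meet $S_p$ (equivalently nearest-point projections of $x$ to $S_p$), and $d_p(x,y)=\operatorname{diam}_{S_p}(\pi_p(x)\cup\pi_p(y))$. *)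

theory Defs
  imports "HOL-Analysis.Analysis" "HOL-Library.Extended_Real" "HOL-Algebra.Group"
begin

definition geod_seg :: "'a::metric_space \<Rightarrow> 'a \<Rightarrow> 'a set \<Rightarrow> bool" where
  "geod_seg x y S \<longleftrightarrow> (\<exists>\<gamma>::real \<Rightarrow> 'a. \<gamma> 0 = x \<and> \<gamma> (dist x y) = y \<and>
      (\<forall>s\<in>{0..dist x y}. \<forall>t\<in>{0..dist x y}. dist (\<gamma> s) (\<gamma> t) = \<bar>s - t\<bar>) \<and>
      S = \<gamma> ` {0..dist x y})"

definition geodesic_metric_space :: "'a::metric_space itself \<Rightarrow> bool" where
  "geodesic_metric_space _ \<longleftrightarrow> (\<forall>x y::'a. \<exists>S. geod_seg x y S)"

definition delta_thin :: "'a::metric_space itself \<Rightarrow> real \<Rightarrow> bool" where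
  "delta_thin _ \<delta> \<longleftrightarrow> (\<forall>(x::'a) y z Sxy Syz Szx.
      geod_seg x y Sxy \<and> geod_seg y z Syz \<and> geod_seg z x Szx \<longrightarrow>
      (\<forall>p\<in>Sxy. \<exists>q\<in>Syz \<union> Szx. dist p q \<le> \<delta>))"

definition isom_action :: "('g, 'b) monoid_scheme \<Rightarrow> ('g \<Rightarrow> 'a::metric_space \<Rightarrow> 'a) \<Rightarrow> bool" where
  "isom_action G act \<longleftrightarrow> group G \<and> act \<one>\<^bsub>G\<^esub> = id \<and>
     (\<forall>g\<in>carrier G. \<forall>h\<in>carrier G. act (g \<otimes>\<^bsub>G\<^esub> h) = act g \<circ> act h) \<and>
     (\<forall>g\<in>carrier G. \<forall>x y. dist (act g x) (act g y) = dist x y)"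

definition fairly_rotating_family ::
  "('g, 'b) monoid_scheme \<Rightarrow> ('g \<Rightarrow> 'a::metric_space \<Rightarrow> 'a) \<Rightarrow> 'a set \<Rightarrow> ('a \<Rightarrow> 'g set) \<Rightarrow> real \<Rightarrow> bool" where
  "fairly_rotating_family G act C Gc \<rho> \<longleftrightarrow>
     (\<forall>g\<in>carrier G. \<forall>c\<in>C. act g c \<in> C) \<and>
     (\<forall>c\<in>C. subgroup (Gc c) G \<and> (\<forall>g\<in>Gc c. act g c = c)) \<and>
     (\<forall>c\<in>C. \<forall>g\<in>carrier G. Gc (act g c) = {g \<otimes>\<^bsub>G\<^esub> h \<otimes>\<^bsub>G\<^esub> inv\<^bsub>G\<^esub> g | h. h \<in> Gc c}) \<and>
     (\<forall>c\<in>C. \<forall>c'\<in>C. c \<noteq> c' \<longrightarrow> \<rho> \<le> dist c c') \<and>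
     (\<forall>c\<in>C. \<forall>g\<in>Gc c - {\<one>\<^bsub>G\<^esub>}. \<forall>x\<in>C - {c}.
        \<exists>S. geod_seg x (act g x) S \<and> (\<exists>z\<in>S. dist z c \<le> 1))"

definition path_len :: "(real \<Rightarrow> 'a::metric_space) \<Rightarrow> ereal" where
  "path_len \<gamma> = Sup {ereal (\<Sum>i<n. dist (\<gamma> (t i)) (\<gamma> (t (Suc i)))) | n t.
      t 0 = 0 \<and> t n = 1 \<and> (\<forall>i<n. t i \<le> t (Suc i))}"

text \<open>Induced path metric on the sphere S_p: infimum of lengths of paths from x to y
  in X minus the open ball B_R(p) (infinity if there is none).\<close>
definition sphere_dist :: "real \<Rightarrow> 'a::metric_space \<Rightarrow> 'a \<Rightarrow> 'a \<Rightarrow> ereal" where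
  "sphere_dist R p x y = Inf {path_len \<gamma> | \<gamma>. continuous_on {0..1} \<gamma> \<and> \<gamma> 0 = x \<and> \<gamma> 1 = y \<and>
      \<gamma> ` {0..1} \<subseteq> - ball p R}"

definition sphere_proj :: "real \<Rightarrow> 'a::metric_space \<Rightarrow> 'a \<Rightarrow> 'a set" where
  "sphere_proj R p x = {z. dist z p = R \<and> (\<exists>S. geod_seg p x S \<and> z \<in> S)}"

definition proj_dist :: "real \<Rightarrow> 'a::metric_space \<Rightarrow> 'a \<Rightarrow> 'a \<Rightarrow> ereal" where
  "proj_dist R p x y = Sup {sphere_dist R p u v | u v.
      u \<in> sphere_proj R p x \<union> sphere_proj R p y \<and> v \<in> sphere_proj R p x \<union> sphere_proj R p y}"

end

theory Submission
  imports Defs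
begin

definition lip1 :: "(real \<Rightarrow> 'a::metric_space) \<Rightarrow> real \<Rightarrow> bool" where
  "lip1 f T \<longleftrightarrow> (\<forall>s\<in>{0..T}. \<forall>t\<in>{0..T}. dist (f s) (f t) \<le> \<bar>s - t\<bar>)"

definition cat :: "real \<Rightarrow> (real \<Rightarrow> 'a) \<Rightarrow> (real \<Rightarrow> 'a) \<Rightarrow> real \<Rightarrow> 'a" where
  "cat T1 f g = (\<lambda>t. if t \<le> T1 then f t else g (t - T1))"

lemma cat_props:
  fixes f g :: "real \<Rightarrow> 'a::metric_space"
  assumes "lip1 f T1" "lip1 g T2" "f T1 = g 0" "T1 \<ge> 0" "T2 \<ge> 0"
  shows "lip1 (cat T1 f g) (T1 + T2)" "cat T1 f g 0 = f 0" "cat T1 f g (T1 + T2) = g T2"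
    "cat T1 f g ` {0..T1+T2} \<subseteq> f ` {0..T1} \<union> g ` {0..T2}"
proof -
  have F: "dist (f s) (f t) \<le> \<bar>s - t\<bar>" if "s \<in> {0..T1}" "t \<in> {0..T1}" for s t
    using assms(1) that unfolding lip1_def by blast
  have Gl: "dist (g s) (g t) \<le> \<bar>s - t\<bar>" if "s \<in> {0..T2}" "t \<in> {0..T2}" for s t
    using assms(2) that unfolding lip1_def by blast
  have mix: "dist (f s) (g (t - T1)) \<le> t - s" if "s \<in> {0..T1}" "t \<in> {T1..T1+T2}" for s t
  proof -
    have "dist (f s) (g (t - T1)) \<le> dist (f s) (f T1) + dist (g 0) (g (t - T1))"
      using dist_triangle assms(3) by metis
    also have "\<dots> \<le> \<bar>s - T1\<bar> + \<bar>0 - (t - T1)\<bar>"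
      using F[of s T1] Gl[of 0 "t - T1"] that assms by auto
    finally show ?thesis using that by auto
  qed
  show "lip1 (cat T1 f g) (T1 + T2)"
    unfolding lip1_def cat_def
  proof (intro ballI)
    fix s t assume s: "s \<in> {0..T1+T2}" and t: "t \<in> {0..T1+T2}"
    show "dist (if s \<le> T1 then f s else g (s - T1)) (if t \<le> T1 then f t else g (t - T1)) \<le> \<bar>s - t\<bar>"
    proof (cases "s \<le> T1"; cases "t \<le> T1")
      assume "s \<le> T1" "t \<le> T1" then show ?thesis using F s t by auto
    next
      assume "s \<le> T1" "\<not> t \<le> T1" then show ?thesis using mix[of s t] s t by auto
    next
      assume "\<not> s \<le> T1" "t \<le> T1" then show ?thesis using mix[of t s] s t by (auto simp: dist_commute)
    next
      assume "\<not> s \<le> T1" "\<not> t \<le> T1" then show ?thesis using Gl[of "s - T1" "t - T1"] s t by auto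
    qed
  qed
  show "cat T1 f g 0 = f 0" using assms by (simp add: cat_def)
  show "cat T1 f g (T1 + T2) = g T2"
    using assms by (cases "T2 = 0") (auto simp: cat_def)
  show "cat T1 f g ` {0..T1+T2} \<subseteq> f ` {0..T1} \<union> g ` {0..T2}"
    by (auto simp: cat_def)
qed

lemma chain_mono:
  fixes t :: "nat \<Rightarrow> real"
  assumes "\<forall>i<n. t i \<le> t (Suc i)"
  shows "i \<le> j \<Longrightarrow> j \<le> n \<Longrightarrow> t i \<le> t j"
proof (induction j)
  case 0 then show ?case by simp
next
  case (Suc j)
  then show ?case using assms
    by (metis Suc_le_eq le_Suc_eq order.trans order_refl)
qed

lemma path_len_lip:
  fixes \<gamma> :: "real \<Rightarrow> 'a::metric_space"
  assumes "L-lipschitz_on {0..1} \<gamma>"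
  shows "path_len \<gamma> \<le> ereal L"
  unfolding path_len_def
proof (rule Sup_least, clarsimp)
  fix n and t :: "nat \<Rightarrow> real"
  assume t0: "t 0 = 0" and tn: "t n = 1" and m: "\<forall>i<n. t i \<le> t (Suc i)"
  have inI: "t i \<in> {0..1}" if "i \<le> n" for i
    using chain_mono[OF m, of 0 i] chain_mono[OF m, of i n] that t0 tn by auto
  have "(\<Sum>i<n. dist (\<gamma> (t i)) (\<gamma> (t (Suc i)))) \<le> (\<Sum>i<n. L * (t (Suc i) - t i))"
  proof (rule sum_mono)
    fix i assume "i \<in> {..<n}"
    then have "t i \<in> {0..1}" "t (Suc i) \<in> {0..1}" "t i \<le> t (Suc i)" using inI m by auto
    then show "dist (\<gamma> (t i)) (\<gamma> (t (Suc i))) \<le> L * (t (Suc i) - t i)"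
      using lipschitz_onD[OF assms, of "t i" "t (Suc i)"] by (auto simp: dist_real_def)
  qed
  also have "\<dots> = L * (t n - t 0)"
    by (simp add: sum_distrib_left[symmetric] sum_lessThan_telescope)
  finally show "(\<Sum>i<n. dist (\<gamma> (t i)) (\<gamma> (t (Suc i)))) \<le> L" using t0 tn by simp
qed

lemma sphere_dist_lip:
  fixes \<sigma> :: "real \<Rightarrow> 'a::metric_space"
  assumes "lip1 \<sigma> T" "T \<ge> 0" "\<forall>t\<in>{0..T}. R \<le> dist c (\<sigma> t)"
  shows "sphere_dist R c (\<sigma> 0) (\<sigma> T) \<le> ereal T"
proof -
  define \<gamma> where "\<gamma> = (\<lambda>t. \<sigma> (T * t))"
  have mapI: "T * t \<in> {0..T}" if "t \<in> {0..1}" for t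
    using that assms(2) by (auto simp: mult_left_le)
  have L: "T-lipschitz_on {0..1} \<gamma>"
  proof (rule lipschitz_onI)
    fix x y :: real assume "x \<in> {0..1}" "y \<in> {0..1}"
    then have "dist (\<sigma> (T * x)) (\<sigma> (T * y)) \<le> \<bar>T * x - T * y\<bar>"
      using assms(1) mapI unfolding lip1_def by blast
    also have "\<dots> = T * dist x y" using assms(2)
      by (simp add: dist_real_def right_diff_distrib[symmetric] abs_mult)
    finally show "dist (\<gamma> x) (\<gamma> y) \<le> T * dist x y" by (simp add: \<gamma>_def)
  qed (use assms in auto)
  have "\<gamma> ` {0..1} \<subseteq> - ball c R"
    using assms(3) mapI by (fastforce simp: \<gamma>_def)
  moreover have "\<gamma> 0 = \<sigma> 0" "\<gamma> 1 = \<sigma> T" by (auto simp: \<gamma>_def)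
  ultimately have "path_len \<gamma> \<in> {path_len \<gamma> | \<gamma>. continuous_on {0..1} \<gamma> \<and> \<gamma> 0 = \<sigma> 0 \<and> \<gamma> 1 = \<sigma> T \<and>
      \<gamma> ` {0..1} \<subseteq> - ball c R}"
    using lipschitz_on_continuous_on[OF L] by blast
  then have "sphere_dist R c (\<sigma> 0) (\<sigma> T) \<le> path_len \<gamma>"
    unfolding sphere_dist_def by (rule Inf_lower)
  also have "\<dots> \<le> ereal T" by (rule path_len_lip[OF L])
  finally show ?thesis .
qed

lemma geod_seg_rev:
  assumes "geod_seg x y S" shows "geod_seg y x S"
proof -
  obtain g where g: "g 0 = x" "g (dist x y) = y"
    "\<forall>s\<in>{0..dist x y}. \<forall>t\<in>{0..dist x y}. dist (g s) (g t) = \<bar>s - t\<bar>" "S = g ` {0..dist x y}"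
    using assms unfolding geod_seg_def by blast
  define d where "d = dist x y"
  define h where "h = (\<lambda>t. g (d - t))"
  have im: "(\<lambda>t. d - t) ` {0..d} = {0..d}"
  proof safe
    fix t assume "t \<in> {0..d}" then show "t \<in> (\<lambda>t. d - t) ` {0..d}"
      by (intro rev_image_eqI[of "d - t"]) auto
  qed auto
  have "S = h ` {0..d}" unfolding h_def using g(4) im d_def
    by (metis image_image)
  moreover have "h 0 = y" "h (dist y x) = x" using g by (auto simp: h_def d_def dist_commute)
  moreover have "\<forall>s\<in>{0..dist y x}. \<forall>t\<in>{0..dist y x}. dist (h s) (h t) = \<bar>s - t\<bar>"
    using g(3) by (auto simp: h_def d_def dist_commute)
  ultimately show ?thesis unfolding geod_seg_def d_def by (metis dist_commute)
qed

lemma geod_seg_refl: "geod_seg x x {x}"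
  unfolding geod_seg_def by (rule exI[of _ "\<lambda>_. x"]) auto

lemma geod_seg_ends:
  assumes "geod_seg x y S" shows "x \<in> S" "y \<in> S"
proof -
  obtain g where g: "g 0 = x" "g (dist x y) = y" "S = g ` {0..dist x y}"
    using assms unfolding geod_seg_def by blast
  show "x \<in> S" using g by (metis atLeastAtMost_iff image_eqI order_refl zero_le_dist)
  show "y \<in> S" using g by (metis atLeastAtMost_iff image_eqI order_refl zero_le_dist)
qed

lemma lip1_isom:
  assumes "\<forall>s\<in>{0..d}. \<forall>t\<in>{0..d}. dist (g s) (g t) = \<bar>s - t\<bar>" "a \<ge> 0" "a + T \<le> d"
  shows "lip1 (\<lambda>t. g (a + t)) T"
  using assms unfolding lip1_def by (auto)

lemma lip1_isom_rev:
  assumes "\<forall>s\<in>{0..d}. \<forall>t\<in>{0..d}. dist (g s) (g t) = \<bar>s - t\<bar>" "a \<le> d" "a - T \<ge> 0"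
  shows "lip1 (\<lambda>t. g (a - t)) T"
  using assms unfolding lip1_def by (auto)


lemma core:
  fixes c p q u v :: "'a::metric_space"
  assumes gs: "geodesic_metric_space TYPE('a)" and thin: "delta_thin TYPE('a) \<delta>" and dpos: "\<delta> > 0"
    and Gp: "geod_seg c p Sp" and Gq: "geod_seg c q Sq" and G: "geod_seg p q S"
    and disj: "S \<inter> ball c (R + 2 * \<delta>) = {}"
    and u: "u \<in> Sp" "dist u c = R" and v: "v \<in> Sq" "dist v c = R" and R0: "R \<ge> 0"
  shows "sphere_dist R c u v \<le> ereal (4 * \<delta>)"
proof -
  obtain ga where ga: "ga 0 = c" "ga (dist c p) = p"
    "\<forall>s\<in>{0..dist c p}. \<forall>t\<in>{0..dist c p}. dist (ga s) (ga t) = \<bar>s - t\<bar>" "Sp = ga ` {0..dist c p}"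
    using Gp unfolding geod_seg_def by blast
  obtain gb where gb: "gb 0 = c" "gb (dist c q) = q"
    "\<forall>s\<in>{0..dist c q}. \<forall>t\<in>{0..dist c q}. dist (gb s) (gb t) = \<bar>s - t\<bar>" "Sq = gb ` {0..dist c q}"
    using Gq unfolding geod_seg_def by blast
  have Sfar: "dist c w \<ge> R + 2 * \<delta>" if "w \<in> S" for w
    using disj that by (auto simp: not_less)
  have dp: "dist c p \<ge> R + 2 * \<delta>" using Sfar geod_seg_ends(1)[OF G] by blast
  have dq: "dist c q \<ge> R + 2 * \<delta>" using Sfar geod_seg_ends(2)[OF G] by blast
  have gad: "dist c (ga s) = s" if "s \<in> {0..dist c p}" for s
    using ga(3) ga(1) that by (metis abs_of_nonneg atLeastAtMost_iff diff_0 abs_minus_cancel order_refl zero_le_dist)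
  have gbd: "dist c (gb s) = s" if "s \<in> {0..dist c q}" for s
    using gb(3) gb(1) that by (metis abs_of_nonneg atLeastAtMost_iff diff_0 abs_minus_cancel order_refl zero_le_dist)
  obtain su where su: "su \<in> {0..dist c p}" "u = ga su" using u(1) ga(4) by blast
  have "su = R" using gad[OF su(1)] su(2) u(2) by (simp add: dist_commute)
  then have uR: "u = ga R" using su by simp
  obtain sv where sv: "sv \<in> {0..dist c q}" "v = gb sv" using v(1) gb(4) by blast
  have "sv = R" using gbd[OF sv(1)] sv(2) v(2) by (simp add: dist_commute)
  then have vR: "v = gb R" using sv by simp
  define u1 where "u1 = ga (R + \<delta>)"
  have u1d: "dist c u1 = R + \<delta>" unfolding u1_def using gad dp dpos R0 by simp
  have Gq': "geod_seg q c Sq" by (rule geod_seg_rev[OF Gq])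
  have near: "\<exists>w\<in>Sq. dist (ga s) w \<le> \<delta>" if "0 \<le> s" "s < R + \<delta>" for s
  proof -
    have sI: "s \<in> {0..dist c p}" using that dp dpos by auto
    have "ga s \<in> Sp" using ga(4) sI by blast
    then obtain w where w: "w \<in> S \<union> Sq" "dist (ga s) w \<le> \<delta>"
      using thin Gp G Gq' unfolding delta_thin_def by blast
    have "w \<notin> S"
    proof
      assume "w \<in> S"
      then have "dist c w \<ge> R + 2 * \<delta>" by (rule Sfar)
      moreover have "dist c w \<le> dist c (ga s) + dist (ga s) w" by (rule dist_triangle)
      ultimately show False using gad[OF sI] w(2) that by linarith
    qed
    then show ?thesis using w by blast
  qed
  have cSq: "compact Sq"
  proof -
    have "1-lipschitz_on {0..dist c q} gb"
      using gb(3) by (intro lipschitz_onI) (auto simp: dist_real_def)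
    then have "continuous_on {0..dist c q} gb" by (rule lipschitz_on_continuous_on)
    then show ?thesis using gb(4) compact_continuous_image by blast
  qed
  have "Sq \<noteq> {}" using v(1) by blast
  moreover have "continuous_on Sq (\<lambda>w. dist u1 w)" by (intro continuous_intros)
  ultimately obtain y where y: "y \<in> Sq" "\<forall>w\<in>Sq. dist u1 y \<le> dist u1 w"
    using continuous_attains_inf[OF cSq] by blast
  have yd: "dist u1 y \<le> \<delta>"
  proof (rule ccontr)
    assume "\<not> dist u1 y \<le> \<delta>"
    define e where "e = dist u1 y - \<delta>"
    have e: "e > 0" using \<open>\<not> dist u1 y \<le> \<delta>\<close> by (simp add: e_def)
    define s where "s = max 0 (R + \<delta> - e / 2)"
    have s: "0 \<le> s" "s < R + \<delta>" "R + \<delta> - s \<le> e / 2" using e dpos R0 unfolding s_def by (auto split: split_max)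
    obtain w where w: "w \<in> Sq" "dist (ga s) w \<le> \<delta>" using near[OF s(1,2)] by blast
    have "dist u1 (ga s) = \<bar>(R + \<delta>) - s\<bar>" unfolding u1_def
      using ga(3) s dp dpos by auto
    then have "dist u1 (ga s) \<le> e / 2" using s by auto
    moreover have "dist u1 w \<le> dist u1 (ga s) + dist (ga s) w" by (rule dist_triangle)
    ultimately have "dist u1 w < dist u1 y" using w e by (simp add: e_def)
    then show False using y(2) w(1) by fastforce
  qed
  obtain r where r: "r \<in> {0..dist c q}" "y = gb r" using y(1) gb(4) by blast
  have ry: "dist c y = r" using gbd r by simp
  have rlo: "r \<ge> R"
    using dist_triangle[of c u1 y] u1d yd ry by (simp add: dist_commute)
  have rhi: "r \<le> R + 2 * \<delta>" using dist_triangle[of c y u1] u1d yd ry by (simp add: dist_commute)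
  obtain J where J: "geod_seg u1 y J" using gs unfolding geodesic_metric_space_def by blast
  obtain gj where gj: "gj 0 = u1" "gj (dist u1 y) = y"
    "\<forall>s\<in>{0..dist u1 y}. \<forall>t\<in>{0..dist u1 y}. dist (gj s) (gj t) = \<bar>s - t\<bar>"
    using J unfolding geod_seg_def by blast
  define l where "l = dist u1 y"
  define f1 where "f1 = (\<lambda>t. ga (R + t))"
  define f2 where "f2 = (\<lambda>t. gj (0 + t))"
  define f3 where "f3 = (\<lambda>t. gb (r - t))"
  have L1: "lip1 f1 \<delta>" unfolding f1_def by (rule lip1_isom[OF ga(3)]) (use R0 dp dpos in auto)
  have L2: "lip1 f2 l" unfolding f2_def l_def by (rule lip1_isom[OF gj(3)]) auto
  have L3: "lip1 f3 (r - R)" unfolding f3_def by (rule lip1_isom_rev[OF gb(3)]) (use r R0 in auto)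
  have ldp: "l \<ge> 0" "l \<le> \<delta>" using yd by (auto simp: l_def)
  define h where "h = cat \<delta> f1 f2"
  have H: "lip1 h (\<delta> + l)" "h 0 = f1 0" "h (\<delta> + l) = f2 l"
    "h ` {0..\<delta>+l} \<subseteq> f1 ` {0..\<delta>} \<union> f2 ` {0..l}"
    using cat_props[OF L1 L2 _ _ ldp(1)] dpos by (auto simp: h_def f1_def f2_def u1_def gj(1))
  define k where "k = cat (\<delta> + l) h f3"
  have K: "lip1 k (\<delta> + l + (r - R))" "k 0 = h 0" "k (\<delta> + l + (r - R)) = f3 (r - R)"
    "k ` {0..\<delta> + l + (r - R)} \<subseteq> h ` {0..\<delta> + l} \<union> f3 ` {0..r - R}"
  proof -
    have m: "h (\<delta> + l) = f3 0" using H(3) gj(2) r(2) unfolding f2_def f3_def l_def by simp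
    show "lip1 k (\<delta> + l + (r - R))" "k 0 = h 0" "k (\<delta> + l + (r - R)) = f3 (r - R)"
      "k ` {0..\<delta> + l + (r - R)} \<subseteq> h ` {0..\<delta> + l} \<union> f3 ` {0..r - R}"
      using cat_props[OF H(1) L3 m] rlo ldp dpos unfolding k_def by auto
  qed
  have far: "R \<le> dist c z" if "z \<in> k ` {0..\<delta> + l + (r - R)}" for z
  proof -
    have "z \<in> f1 ` {0..\<delta>} \<or> z \<in> f2 ` {0..l} \<or> z \<in> f3 ` {0..r - R}" using K(4) H(4) that by blast
    then show ?thesis
    proof (elim disjE imageE)
      fix t assume "t \<in> {0..\<delta>}" "z = f1 t"
      then show ?thesis using gad[of "R + t"] R0 dp dpos by (auto simp: f1_def)
    next
      fix t assume t: "t \<in> {0..l}" "z = f2 t"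
      have "dist u1 (gj t) = t" using gj(3) gj(1) t(1) by (force simp: l_def)
      then show ?thesis using dist_triangle[of c u1 "gj t"] u1d t ldp by (auto simp: f2_def dist_commute)
    next
      fix t assume "t \<in> {0..r - R}" "z = f3 t"
      then show ?thesis using gbd[of "r - t"] r R0 by (auto simp: f3_def)
    qed
  qed
  have "sphere_dist R c (k 0) (k (\<delta> + l + (r - R))) \<le> ereal (\<delta> + l + (r - R))"
    using sphere_dist_lip[OF K(1)] far rlo ldp dpos by auto
  moreover have "k 0 = u" using K(2) H(2) uR by (simp add: f1_def)
  moreover have "k (\<delta> + l + (r - R)) = v" using K(3) vR by (simp add: f3_def)
  moreover have "\<delta> + l + (r - R) \<le> 4 * \<delta>" using ldp rhi by linarith
  ultimately show ?thesis by (metis ereal_less_eq(3) order.trans)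
qed


theorem lemma3p4:
  fixes \<delta> \<rho> R :: real
    and a b c :: "'a::metric_space"
    and G :: "('g, 'b) monoid_scheme"
    and act :: "'g \<Rightarrow> 'a \<Rightarrow> 'a"
    and C :: "'a set"
    and Gc :: "'a \<Rightarrow> 'g set"
    and Sab :: "'a set"
  assumes "geodesic_metric_space TYPE('a)"
    and "\<delta> > 0"
    and "delta_thin TYPE('a) \<delta>"
    and "isom_action G act"
    and "fairly_rotating_family G act C Gc \<rho>"
    and "\<rho> \<ge> 20 * \<delta>"
    and "2 + 2 * \<delta> \<le> R" and "R \<le> \<rho> / 2 - 3 * \<delta>"
    and "c \<in> C"
    and "geod_seg a b Sab"
    and "Sab \<inter> ball c (R + 2 * \<delta>) = {}"
  shows "proj_dist R c a b \<le> ereal (4 * \<delta>)"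
proof -
  have R0: "R \<ge> 0" using assms(2,7) by linarith
  have aS: "a \<in> Sab" and bS: "b \<in> Sab" using geod_seg_ends[OF assms(10)] by auto
  have Ga: "{a} \<inter> ball c (R + 2 * \<delta>) = {}" using aS assms(11) by blast
  have Gb: "{b} \<inter> ball c (R + 2 * \<delta>) = {}" using bS assms(11) by blast
  have rev: "geod_seg b a Sab" by (rule geod_seg_rev[OF assms(10)])
  have key: "sphere_dist R c u v \<le> ereal (4 * \<delta>)"
    if u: "u \<in> sphere_proj R c a \<union> sphere_proj R c b" and v: "v \<in> sphere_proj R c a \<union> sphere_proj R c b"
    for u v
  proof -
    obtain pu Su where pu: "pu = a \<or> pu = b" "geod_seg c pu Su" "u \<in> Su" "dist u c = R"
      using u unfolding sphere_proj_def by blast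
    obtain pv Sv where pv: "pv = a \<or> pv = b" "geod_seg c pv Sv" "v \<in> Sv" "dist v c = R"
      using v unfolding sphere_proj_def by blast
    have "\<exists>S. geod_seg pu pv S \<and> S \<inter> ball c (R + 2 * \<delta>) = {}"
      using pu(1) pv(1) assms(10,11) rev Ga Gb geod_seg_refl by metis
    then obtain S where "geod_seg pu pv S" "S \<inter> ball c (R + 2 * \<delta>) = {}" by blast
    then show ?thesis
      using core[OF assms(1,3,2) pu(2) pv(2)] pu(3,4) pv(3,4) R0 by blast
  qed
  show ?thesis unfolding proj_dist_def
    by (rule Sup_least) (use key in blast)
qed

end
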